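(* Let $m>1$, $N\ge2$, $\chi>0$, $X_0\in\mathcal R^N$, and let $X$ be the maximal solution in $\mathcal R^N$ on $[0,T)$ of the gradient flow system with $X(0)=X_0$. Define $f_{m+1}(t)=\frac1{m+1}|X(t)|^{m+1}$. Then $f_{m+1}$ is concave on $[0,T)$, and for all $t\in[0,T)$, $$\frac{df_{m+1}}{dt}(t)=(m-1)\,\mathcal F^N_m(X(t))\,|X(t)|^{m-1},\qquad \frac{d^2f_{m+1}}{dt^2}(t)=-\frac{m-1}{m+1}\,f_{m+1}(t)^{-1}\,\mathcal H^N_{m+1}\Big(\frac{X(t)}{|X(t)|}\Big),$$ where for $Y\in\mathcal R^N$ with $|Y|=1$, $\mathcal H^N_{m+1}(Y)=|\nabla\mathcal F^N_m(Y)|^2-\big((m-1)\mathcal F^N_m(Y)\big)^2\ge0$.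
   Context: $\mathcal R^N=\{X\in\mathbb R^N: X_1<\dots<X_N,\ \sum_iX_i=0\}$; $|\cdot|$ is the Euclidean norm and $\nabla$ the Euclidean gradient on $\mathbb R^N$. $\mathcal F^N_m(X)=\frac1{m-1}\sum_{i=1}^{N-1}(X_{i+1}-X_i)^{1-m}-\frac{\chi}{m-1}\sum_{1\le i\ne j\le N}|X_i-X_j|^{1-m}$. Gradient flow system: for $i=1,\dots,N$, $\dot X_i=-(X_{i+1}-X_i)^{-m}+(X_i-X_{i-1})^{-m}+2\chi\sum_{j\ne i}\mathrm{sign}(j-i)|X_j-X_i|^{-m}$, the first term absent for $i=N$ and the second for $i=1$ (i.e. $\dot X=-\nabla\mathcal F^N_m(X)$). *)

theory Defs
  imports "HOL-Analysis.Analysis" "HOL-Library.Extended_Real"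
begin

text \<open>Points of R^N are represented as functions nat => real; only the
components with indices 1..N are meaningful.\<close>

definition inRN :: "nat \<Rightarrow> (nat \<Rightarrow> real) \<Rightarrow> bool" where
  "inRN N X \<longleftrightarrow> (\<forall>i\<in>{1..<N}. X i < X (Suc i)) \<and> (\<Sum>i=1..N. X i) = 0"

definition enorm :: "nat \<Rightarrow> (nat \<Rightarrow> real) \<Rightarrow> real" where
  "enorm N X = sqrt (\<Sum>i=1..N. (X i)\<^sup>2)"

definition FmN :: "real \<Rightarrow> real \<Rightarrow> nat \<Rightarrow> (nat \<Rightarrow> real) \<Rightarrow> real" where
  "FmN m chi N X =
     1 / (m - 1) * (\<Sum>i=1..<N. (X (Suc i) - X i) powr (1 - m))
   - chi / (m - 1) * (\<Sum>i\<in>{1..N}. \<Sum>j\<in>{1..N} - {i}. \<bar>X i - X j\<bar> powr (1 - m))"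

definition gradF :: "real \<Rightarrow> real \<Rightarrow> nat \<Rightarrow> (nat \<Rightarrow> real) \<Rightarrow> nat \<Rightarrow> real" where
  "gradF m chi N X i = deriv (\<lambda>s. FmN m chi N (X(i := s))) (X i)"

definition HmN :: "real \<Rightarrow> real \<Rightarrow> nat \<Rightarrow> (nat \<Rightarrow> real) \<Rightarrow> real" where
  "HmN m chi N Y = (enorm N (gradF m chi N Y))\<^sup>2 - ((m - 1) * FmN m chi N Y)\<^sup>2"

definition flow_rhs :: "real \<Rightarrow> real \<Rightarrow> nat \<Rightarrow> (nat \<Rightarrow> real) \<Rightarrow> nat \<Rightarrow> real" where
  "flow_rhs m chi N X i =
     (if i < N then - ((X (Suc i) - X i) powr (- m)) else 0)
   + (if 1 < i then (X i - X (i - 1)) powr (- m) else 0)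
   + 2 * chi * (\<Sum>j\<in>{1..N} - {i}. sgn (real j - real i) * \<bar>X j - X i\<bar> powr (- m))"

definition is_solution ::
  "real \<Rightarrow> real \<Rightarrow> nat \<Rightarrow> (nat \<Rightarrow> real) \<Rightarrow> ereal \<Rightarrow> (real \<Rightarrow> nat \<Rightarrow> real) \<Rightarrow> bool" where
  "is_solution m chi N X0 T X \<longleftrightarrow>
     0 < T \<and> (\<forall>i\<in>{1..N}. X 0 i = X0 i) \<and>
     (\<forall>t. 0 \<le> t \<and> ereal t < T \<longrightarrow> inRN N (X t) \<and>
        (\<forall>i\<in>{1..N}. ((\<lambda>s. X s i) has_real_derivative flow_rhs m chi N (X t) i)
                        (at t within {s. 0 \<le> s \<and> ereal s < T})))"

definition is_maximal_solution ::
  "real \<Rightarrow> real \<Rightarrow> nat \<Rightarrow> (nat \<Rightarrow> real) \<Rightarrow> ereal \<Rightarrow> (real \<Rightarrow> nat \<Rightarrow> real) \<Rightarrow> bool" where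
  "is_maximal_solution m chi N X0 T X \<longleftrightarrow>
     is_solution m chi N X0 T X \<and>
     \<not> (\<exists>T' Y. T < T' \<and> is_solution m chi N X0 T' Y \<and>
          (\<forall>t. 0 \<le> t \<and> ereal t < T \<longrightarrow> (\<forall>i\<in>{1..N}. Y t i = X t i)))"

end

theory Submission imports Defs begin

lemma DERIV_abs_nz:
  assumes "y \<noteq> (0::real)" shows "(abs has_real_derivative sgn y) (at y)"
proof (cases "y > 0")
  case True
  have "eventually (\<lambda>z. z \<in> {0<..}) (nhds y)"
    using True by (intro eventually_nhds_in_open) auto
  then have ev: "eventually (\<lambda>z. \<bar>z\<bar> = z) (nhds y)"
    by (auto elim: eventually_mono)
  show ?thesis
    by (subst DERIV_cong_ev[OF refl ev refl]) (use True in \<open>auto intro: derivative_eq_intros\<close>)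
next
  case False
  then have y: "y < 0" using assms by auto
  have "eventually (\<lambda>z. z \<in> {..<0}) (nhds y)"
    using y by (intro eventually_nhds_in_open) auto
  then have ev: "eventually (\<lambda>z. \<bar>z\<bar> = - z) (nhds y)"
    by (auto elim: eventually_mono)
  show ?thesis
    by (subst DERIV_cong_ev[OF refl ev refl]) (use y in \<open>auto intro!: derivative_eq_intros\<close>)
qed

lemma DERIV_abs_powr:
  fixes g :: "real \<Rightarrow> real"
  assumes "g x \<noteq> 0" "(g has_real_derivative D) (at x within s)"
  shows "((\<lambda>t. \<bar>g t\<bar> powr (1 - m)) has_real_derivative
           (1 - m) * (\<bar>g x\<bar> powr (- m) * sgn (g x)) * D) (at x within s)"
proof -
  have a: "((\<lambda>t. \<bar>g t\<bar>) has_real_derivative sgn (g x) * D) (at x within s)"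
    using DERIV_chain2[OF DERIV_abs_nz[OF assms(1)] assms(2)] .
  have "((\<lambda>t. \<bar>g t\<bar> powr (1 - m)) has_real_derivative (1 - m) * \<bar>g x\<bar> powr (1 - m - 1) * (sgn (g x) * D)) (at x within s)"
    by (rule DERIV_chain2[OF has_real_derivative_powr a]) (use assms in auto)
  then show ?thesis by (simp add: algebra_simps)
qed

lemma DERIV_pos_powr:
  fixes g :: "real \<Rightarrow> real"
  assumes "g x > 0" "(g has_real_derivative D) (at x within s)"
  shows "((\<lambda>t. g t powr (1 - m)) has_real_derivative
           (1 - m) * g x powr (- m) * D) (at x within s)"
proof -
  have "((\<lambda>t. g t powr (1 - m)) has_real_derivative (1 - m) * g x powr (1 - m - 1) * D) (at x within s)"
    by (rule DERIV_chain2[OF has_real_derivative_powr assms(2)]) (use assms in auto)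
  then show ?thesis by (simp add: algebra_simps)
qed

definition incr :: "nat \<Rightarrow> (nat \<Rightarrow> real) \<Rightarrow> bool" where
  "incr N X \<longleftrightarrow> (\<forall>i\<in>{1..<N}. X i < X (Suc i))"

lemma incr_mono:
  assumes "incr N X" "1 \<le> a" "a < b" "b \<le> N" shows "X a < X b"
  using assms(3,4)
proof (induction b)
  case 0 then show ?case by simp
next
  case (Suc b)
  have s: "X b < X (Suc b)" using assms(1,2) Suc.prems unfolding incr_def by auto
  show ?case
  proof (cases "a = b")
    case True then show ?thesis using s by simp
  next
    case False then have "X a < X b" using Suc by auto
    then show ?thesis using s by simp
  qed
qed

lemma incr_neq:
  assumes "incr N X" "a \<in> {1..N}" "b \<in> {1..N}" "a \<noteq> b" shows "X a \<noteq> X b"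
  using incr_mono[OF assms(1), of a b] incr_mono[OF assms(1), of b a] assms
  by (cases a b rule: linorder_cases) auto

lemma incr_sgn:
  assumes "incr N X" "a \<in> {1..N}" "b \<in> {1..N}"
  shows "sgn (X a - X b) = sgn (real a - real b)"
  using incr_mono[OF assms(1), of a b] incr_mono[OF assms(1), of b a] assms
  by (cases a b rule: linorder_cases) auto

definition Draw :: "real \<Rightarrow> real \<Rightarrow> nat \<Rightarrow> (nat \<Rightarrow> real) \<Rightarrow> (nat \<Rightarrow> real) \<Rightarrow> real" where
  "Draw m chi N X V =
     1 / (m - 1) * (\<Sum>i=1..<N. (1 - m) * (X (Suc i) - X i) powr (- m) * (V (Suc i) - V i))
   - chi / (m - 1) * (\<Sum>i\<in>{1..N}. \<Sum>j\<in>{1..N} - {i}.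
        (1 - m) * (\<bar>X i - X j\<bar> powr (- m) * sgn (X i - X j)) * (V i - V j))"

lemma chain_raw:
  assumes "incr N (Z t)"
    and "\<And>i. i \<in> {1..N} \<Longrightarrow> ((\<lambda>s. Z s i) has_real_derivative V i) (at t within S)"
  shows "((\<lambda>s. FmN m chi N (Z s)) has_real_derivative Draw m chi N (Z t) V) (at t within S)"
  unfolding FmN_def Draw_def
proof (intro DERIV_diff DERIV_cmult DERIV_sum)
  fix i assume i: "i \<in> {1..<N}"
  show "((\<lambda>s. (Z s (Suc i) - Z s i) powr (1 - m)) has_real_derivative
      (1 - m) * (Z t (Suc i) - Z t i) powr (- m) * (V (Suc i) - V i)) (at t within S)"
    using i assms(1) unfolding incr_def
    by (intro DERIV_pos_powr DERIV_diff assms(2)) auto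
next
  fix i j assume i: "i \<in> {1..N}" and j: "j \<in> {1..N} - {i}"
  show "((\<lambda>s. \<bar>Z s i - Z s j\<bar> powr (1 - m)) has_real_derivative
      (1 - m) * (\<bar>Z t i - Z t j\<bar> powr (- m) * sgn (Z t i - Z t j)) * (V i - V j)) (at t within S)"
    using i j incr_neq[OF assms(1), of i j]
    by (intro DERIV_abs_powr DERIV_diff assms(2)) auto
qed

definition Pg :: "real \<Rightarrow> real \<Rightarrow> nat \<Rightarrow> (nat \<Rightarrow> real) \<Rightarrow> nat \<Rightarrow> real" where
  "Pg m chi N X i = - flow_rhs m chi N X i"

lemma swap_off:
  assumes "finite A"
  shows "(\<Sum>a\<in>A. \<Sum>b\<in>A-{a}. g a b) = (\<Sum>b\<in>A. \<Sum>a\<in>A-{b}. g a b)"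
proof -
  have "(\<Sum>a\<in>A. sum (g a) {b\<in>A. b\<noteq>a}) = (\<Sum>b\<in>A. \<Sum>a | a\<in>A \<and> b\<noteq>a. g a b)"
    by (rule sum.swap_restrict[OF assms assms])
  moreover have "\<And>a. {b\<in>A. b\<noteq>a} = A - {a}" by auto
  moreover have "\<And>b. {a. a\<in>A \<and> b\<noteq>a} = A - {b}" by auto
  ultimately show ?thesis by simp
qed

lemma Pg_alt:
  assumes "incr N X" "i \<in> {1..N}"
  shows "Pg m chi N X i = (if i < N then (X (Suc i) - X i) powr (- m) else 0)
     - (if 1 < i then (X i - X (i - 1)) powr (- m) else 0)
     + 2 * chi * (\<Sum>j\<in>{1..N} - {i}. \<bar>X i - X j\<bar> powr (- m) * sgn (X i - X j))"
proof -
  have "(\<Sum>j\<in>{1..N} - {i}. sgn (real j - real i) * \<bar>X j - X i\<bar> powr (- m))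
      = (\<Sum>j\<in>{1..N} - {i}. - (\<bar>X i - X j\<bar> powr (- m) * sgn (X i - X j)))"
  proof (rule sum.cong[OF refl])
    fix j assume j: "j \<in> {1..N} - {i}"
    have "sgn (X j - X i) = sgn (real j - real i)"
      using incr_sgn[OF assms(1), of j i] j assms(2) by auto
    moreover have "sgn (X j - X i) = - sgn (X i - X j)"
      by (metis minus_diff_eq sgn_minus)
    moreover have "\<bar>X j - X i\<bar> = \<bar>X i - X j\<bar>" by simp
    ultimately have h: "sgn (real j - real i) = - sgn (X i - X j)" by simp
    show "sgn (real j - real i) * \<bar>X j - X i\<bar> powr (- m)
       = - (\<bar>X i - X j\<bar> powr (- m) * sgn (X i - X j))" by (simp add: h abs_minus_commute)
  qed
  then show ?thesis
    unfolding Pg_def flow_rhs_def by (simp add: sum_negf)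
qed

lemma Suc_img: "{i\<in>{1..N}. 1 < i} = Suc ` {1..<N}"
proof
  show "{i\<in>{1..N}. 1 < i} \<subseteq> Suc ` {1..<N}"
  proof
    fix i assume i: "i \<in> {i\<in>{1..N}. 1 < i}"
    then have "i = Suc (i - 1)" "i - 1 \<in> {1..<N}" by auto
    then show "i \<in> Suc ` {1..<N}" by (metis imageI)
  qed
qed auto

lemma ring1: "((a::real) - b + 2 * chi * c) * v = v * a - v * b + 2 * chi * (v * c)"
  by (simp add: algebra_simps)

lemma rearr:
  assumes "m > 1" "incr N X"
  shows "Draw m chi N X V = (\<Sum>i=1..N. Pg m chi N X i * V i)"
proof -
  define E where "E k = (X (Suc k) - X k) powr (- m)" for k
  define w where "w a b = \<bar>X a - X b\<bar> powr (- m) * sgn (X a - X b)" for a b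
  have wa: "w b a = - w a b" for a b
  proof -
    have "sgn (X b - X a) = - sgn (X a - X b)" by (metis minus_diff_eq sgn_minus)
    then show ?thesis unfolding w_def by (simp add: abs_minus_commute)
  qed
  have m1: "m - 1 \<noteq> 0" using assms by simp
  have d1: "1 / (m - 1) * (\<Sum>i=1..<N. (1 - m) * (X (Suc i) - X i) powr (- m) * (V (Suc i) - V i))
      = - (\<Sum>k=1..<N. E k * V (Suc k)) + (\<Sum>k=1..<N. E k * V k)"
  proof -
    have "(\<Sum>i=1..<N. (1 - m) * (X (Suc i) - X i) powr (- m) * (V (Suc i) - V i))
        = (\<Sum>k=1..<N. (1 - m) * (E k * V (Suc k)) - (1 - m) * (E k * V k))"
      by (rule sum.cong[OF refl]) (simp add: E_def right_diff_distrib)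
    also have "\<dots> = (1 - m) * (\<Sum>k=1..<N. E k * V (Suc k)) - (1 - m) * (\<Sum>k=1..<N. E k * V k)"
      by (simp add: sum_subtractf sum_distrib_left)
    finally show ?thesis using m1 by (simp add: field_simps)
  qed
  have d2: "(\<Sum>i\<in>{1..N}. \<Sum>j\<in>{1..N} - {i}.
        (1 - m) * (\<bar>X i - X j\<bar> powr (- m) * sgn (X i - X j)) * (V i - V j))
      = (1 - m) * (2 * (\<Sum>i\<in>{1..N}. V i * (\<Sum>j\<in>{1..N} - {i}. w i j)))"
  proof -
    have s1: "(\<Sum>i\<in>{1..N}. \<Sum>j\<in>{1..N} - {i}. w i j * V j)
        = - (\<Sum>i\<in>{1..N}. \<Sum>j\<in>{1..N} - {i}. w i j * V i)"
    proof -
      have "(\<Sum>i\<in>{1..N}. \<Sum>j\<in>{1..N} - {i}. w i j * V j)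
          = (\<Sum>j\<in>{1..N}. \<Sum>i\<in>{1..N} - {j}. w i j * V j)"
        by (rule swap_off) simp
      also have "\<dots> = (\<Sum>j\<in>{1..N}. \<Sum>i\<in>{1..N} - {j}. - (w j i * V j))"
        by (intro sum.cong refl) (metis wa mult_minus_left)
      finally show ?thesis by (simp add: sum_negf)
    qed
    have "(\<Sum>i\<in>{1..N}. \<Sum>j\<in>{1..N} - {i}.
        (1 - m) * (\<bar>X i - X j\<bar> powr (- m) * sgn (X i - X j)) * (V i - V j))
      = (\<Sum>i\<in>{1..N}. \<Sum>j\<in>{1..N} - {i}. (1 - m) * (w i j * V i) - (1 - m) * (w i j * V j))"
      by (intro sum.cong refl) (simp add: w_def right_diff_distrib)
    also have "\<dots> = (1 - m) * ((\<Sum>i\<in>{1..N}. \<Sum>j\<in>{1..N} - {i}. w i j * V i)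
           - (\<Sum>i\<in>{1..N}. \<Sum>j\<in>{1..N} - {i}. w i j * V j))"
      by (simp add: sum_subtractf sum_distrib_left right_diff_distrib)
    also have "\<dots> = (1 - m) * (2 * (\<Sum>i\<in>{1..N}. \<Sum>j\<in>{1..N} - {i}. w i j * V i))"
      unfolding s1 by simp
    also have "(\<Sum>i\<in>{1..N}. \<Sum>j\<in>{1..N} - {i}. w i j * V i) = (\<Sum>i\<in>{1..N}. V i * (\<Sum>j\<in>{1..N} - {i}. w i j))"
      by (simp add: sum_distrib_left mult.commute)
    finally show ?thesis .
  qed
  have p1: "(\<Sum>i=1..N. V i * (if i < N then E i else 0)) = (\<Sum>k=1..<N. E k * V k)"
  proof -
    have "(\<Sum>i=1..N. V i * (if i < N then E i else 0)) = (\<Sum>i\<in>{1..N}. if i < N then E i * V i else 0)"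
      by (rule sum.cong) auto
    also have "\<dots> = sum (\<lambda>i. E i * V i) {i\<in>{1..N}. i < N}"
      by (rule sum.inter_filter[symmetric]) simp
    also have "{i\<in>{1..N}. i < N} = {1..<N}" by auto
    finally show ?thesis .
  qed
  have p2: "(\<Sum>i=1..N. V i * (if 1 < i then E (i - 1) else 0)) = (\<Sum>k=1..<N. E k * V (Suc k))"
  proof -
    have "(\<Sum>i=1..N. V i * (if 1 < i then E (i - 1) else 0)) = (\<Sum>i\<in>{1..N}. if 1 < i then E (i - 1) * V i else 0)"
      by (rule sum.cong) auto
    also have "\<dots> = sum (\<lambda>i. E (i - 1) * V i) {i\<in>{1..N}. 1 < i}"
      by (rule sum.inter_filter[symmetric]) simp
    also have "\<dots> = sum (\<lambda>i. E (i - 1) * V i) (Suc ` {1..<N})"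
      by (simp only: Suc_img)
    also have "\<dots> = (\<Sum>k=1..<N. E k * V (Suc k))"
      by (subst sum.reindex) auto
    finally show ?thesis .
  qed
  have pg: "(\<Sum>i=1..N. Pg m chi N X i * V i) =
      (\<Sum>i=1..N. V i * (if i < N then E i else 0)) - (\<Sum>i=1..N. V i * (if 1 < i then E (i - 1) else 0))
      + 2 * chi * (\<Sum>i\<in>{1..N}. V i * (\<Sum>j\<in>{1..N} - {i}. w i j))"
  proof -
    have "(\<Sum>i=1..N. Pg m chi N X i * V i) = (\<Sum>i=1..N. V i * (if i < N then E i else 0)
       - V i * (if 1 < i then E (i - 1) else 0) + 2 * chi * (V i * (\<Sum>j\<in>{1..N} - {i}. w i j)))"
    proof (rule sum.cong[OF refl])
      fix i assume i: "i \<in> {1..N}"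
      have a1: "(if 1 < i then E (i - 1) else 0) = (if 1 < i then (X i - X (i - 1)) powr (- m) else 0)"
        by (auto simp: E_def)
      have a2: "(if i < N then E i else 0) = (if i < N then (X (Suc i) - X i) powr (- m) else 0)"
        by (simp add: E_def)
      have a3: "(\<Sum>j\<in>{1..N} - {i}. w i j) = (\<Sum>j\<in>{1..N} - {i}. \<bar>X i - X j\<bar> powr (- m) * sgn (X i - X j))"
        by (simp add: w_def)
      show "Pg m chi N X i * V i = V i * (if i < N then E i else 0)
       - V i * (if 1 < i then E (i - 1) else 0) + 2 * chi * (V i * (\<Sum>j\<in>{1..N} - {i}. w i j))"
        unfolding Pg_alt[OF assms(2) i] a1 a2 a3 by (rule ring1)
    qed
    also have "\<dots> = (\<Sum>i=1..N. V i * (if i < N then E i else 0)) - (\<Sum>i=1..N. V i * (if 1 < i then E (i - 1) else 0))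
      + (\<Sum>i\<in>{1..N}. 2 * chi * (V i * (\<Sum>j\<in>{1..N} - {i}. w i j)))"
      by (simp only: sum.distrib sum_subtractf)
    also have "(\<Sum>i\<in>{1..N}. 2 * chi * (V i * (\<Sum>j\<in>{1..N} - {i}. w i j)))
        = 2 * chi * (\<Sum>i\<in>{1..N}. V i * (\<Sum>j\<in>{1..N} - {i}. w i j))"
      by (rule sum_distrib_left[symmetric])
    finally show ?thesis .
  qed
  have key: "chi / (m - 1) * ((1 - m) * (2 * W)) = - (2 * chi * W)" for W
    using m1 by (simp add: field_simps)
  show ?thesis
    unfolding Draw_def d1 d2 pg p1 p2 key by simp
qed


lemma powr_m1: "(d::real) > 0 \<Longrightarrow> d powr (- m) * d = d powr (1 - m)"
proof -
  assume d: "d > 0"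
  have "d powr (1 - m) = d powr (- m + 1)" by simp
  also have "\<dots> = d powr (- m) * d powr 1" by (rule powr_add)
  finally show ?thesis using d by simp
qed

lemma euler:
  assumes "m > 1" "incr N X"
  shows "Draw m chi N X X = (1 - m) * FmN m chi N X"
proof -
  have a: "(\<Sum>i=1..<N. (1 - m) * (X (Suc i) - X i) powr (- m) * (X (Suc i) - X i))
      = (1 - m) * (\<Sum>i=1..<N. (X (Suc i) - X i) powr (1 - m))"
  proof -
    have "(\<Sum>i=1..<N. (1 - m) * (X (Suc i) - X i) powr (- m) * (X (Suc i) - X i))
       = (\<Sum>i=1..<N. (1 - m) * (X (Suc i) - X i) powr (1 - m))"
    proof (rule sum.cong[OF refl])
      fix i assume "i \<in> {1..<N}"
      then have "X (Suc i) - X i > 0" using assms(2) unfolding incr_def by auto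
      from powr_m1[OF this, of m] show "(1 - m) * (X (Suc i) - X i) powr (- m) * (X (Suc i) - X i)
         = (1 - m) * (X (Suc i) - X i) powr (1 - m)" by (simp add: mult.assoc)
    qed
    then show ?thesis by (simp add: sum_distrib_left)
  qed
  have b: "(\<Sum>i\<in>{1..N}. \<Sum>j\<in>{1..N} - {i}.
        (1 - m) * (\<bar>X i - X j\<bar> powr (- m) * sgn (X i - X j)) * (X i - X j))
      = (1 - m) * (\<Sum>i\<in>{1..N}. \<Sum>j\<in>{1..N} - {i}. \<bar>X i - X j\<bar> powr (1 - m))"
  proof -
    have "(\<Sum>i\<in>{1..N}. \<Sum>j\<in>{1..N} - {i}.
        (1 - m) * (\<bar>X i - X j\<bar> powr (- m) * sgn (X i - X j)) * (X i - X j))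
       = (\<Sum>i\<in>{1..N}. \<Sum>j\<in>{1..N} - {i}. (1 - m) * \<bar>X i - X j\<bar> powr (1 - m))"
    proof (intro sum.cong refl)
      fix i j assume i: "i \<in> {1..N}" and j: "j \<in> {1..N} - {i}"
      then have "X i \<noteq> X j" using incr_neq[OF assms(2), of i j] by auto
      then have p: "\<bar>X i - X j\<bar> > 0" by simp
      have "sgn (X i - X j) * (X i - X j) = \<bar>X i - X j\<bar>" by (simp add: sgn_mult_self_eq abs_sgn mult.commute)
      then show "(1 - m) * (\<bar>X i - X j\<bar> powr (- m) * sgn (X i - X j)) * (X i - X j)
         = (1 - m) * \<bar>X i - X j\<bar> powr (1 - m)"
        using powr_m1[OF p, of m] by (simp add: mult.assoc)
    qed
    then show ?thesis by (simp add: sum_distrib_left)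
  qed
  have gen: "1 / (m - 1) * ((1 - m) * A) - chi / (m - 1) * ((1 - m) * B)
      = (1 - m) * (1 / (m - 1) * A - chi / (m - 1) * B)" for A B
    by (simp add: algebra_simps)
  show ?thesis unfolding Draw_def FmN_def a b gen ..
qed

lemma FmN_scale:
  assumes "c > 0" "incr N X"
  shows "FmN m chi N (\<lambda>i. c * X i) = c powr (1 - m) * FmN m chi N X"
proof -
  have a: "(\<Sum>i=1..<N. (c * X (Suc i) - c * X i) powr (1 - m))
      = c powr (1 - m) * (\<Sum>i=1..<N. (X (Suc i) - X i) powr (1 - m))"
    unfolding sum_distrib_left
  proof (rule sum.cong[OF refl])
    fix i assume "i \<in> {1..<N}"
    then have "X (Suc i) - X i > 0" using assms(2) unfolding incr_def by auto
    then show "(c * X (Suc i) - c * X i) powr (1 - m) = c powr (1 - m) * (X (Suc i) - X i) powr (1 - m)"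
      using assms(1) by (simp add: right_diff_distrib[symmetric] powr_mult)
  qed
  have b: "(\<Sum>i\<in>{1..N}. \<Sum>j\<in>{1..N} - {i}. \<bar>c * X i - c * X j\<bar> powr (1 - m))
      = c powr (1 - m) * (\<Sum>i\<in>{1..N}. \<Sum>j\<in>{1..N} - {i}. \<bar>X i - X j\<bar> powr (1 - m))"
    unfolding sum_distrib_left
  proof (intro sum.cong refl)
    fix i j
    have "\<bar>c * X i - c * X j\<bar> = c * \<bar>X i - X j\<bar>"
      using assms(1) by (simp add: right_diff_distrib[symmetric] abs_mult)
    then show "\<bar>c * X i - c * X j\<bar> powr (1 - m) = c powr (1 - m) * \<bar>X i - X j\<bar> powr (1 - m)"
      using assms(1) by (simp add: powr_mult)
  qed
  show ?thesis unfolding FmN_def a b by (simp add: algebra_simps)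
qed

lemma Pg_scale:
  assumes "c > 0" "incr N X" "i \<in> {1..N}"
  shows "Pg m chi N (\<lambda>i. c * X i) i = c powr (- m) * Pg m chi N X i"
proof -
  have a: "(if i < N then - ((c * X (Suc i) - c * X i) powr (- m)) else 0)
      = c powr (- m) * (if i < N then - ((X (Suc i) - X i) powr (- m)) else 0)"
  proof (cases "i < N")
    case True
    then have "X (Suc i) - X i > 0" using assms(2,3) unfolding incr_def by auto
    then show ?thesis using True assms(1) by (simp add: right_diff_distrib[symmetric] powr_mult)
  qed simp
  have b: "(if 1 < i then (c * X i - c * X (i - 1)) powr (- m) else 0)
      = c powr (- m) * (if 1 < i then (X i - X (i - 1)) powr (- m) else 0)"
  proof (cases "1 < i")
    case True
    then have "i - 1 \<in> {1..<N}" using assms(3) by auto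
    then have "X (Suc (i - 1)) - X (i - 1) > 0" using assms(2) unfolding incr_def by auto
    moreover have "Suc (i - 1) = i" using True by simp
    ultimately have "X i - X (i - 1) > 0" by simp
    then show ?thesis using True assms(1) by (simp add: right_diff_distrib[symmetric] powr_mult)
  qed simp
  have c: "(\<Sum>j\<in>{1..N} - {i}. sgn (real j - real i) * \<bar>c * X j - c * X i\<bar> powr (- m))
      = c powr (- m) * (\<Sum>j\<in>{1..N} - {i}. sgn (real j - real i) * \<bar>X j - X i\<bar> powr (- m))"
    unfolding sum_distrib_left
  proof (rule sum.cong[OF refl])
    fix j
    have "\<bar>c * X j - c * X i\<bar> = c * \<bar>X j - X i\<bar>"
      using assms(1) by (simp add: right_diff_distrib[symmetric] abs_mult)
    then show "sgn (real j - real i) * \<bar>c * X j - c * X i\<bar> powr (- m)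
        = c powr (- m) * (sgn (real j - real i) * \<bar>X j - X i\<bar> powr (- m))"
      using assms(1) by (simp add: powr_mult)
  qed
  show ?thesis unfolding Pg_def flow_rhs_def a b c by (simp add: algebra_simps)
qed

lemma incr_scale: "c > 0 \<Longrightarrow> incr N X \<Longrightarrow> incr N (\<lambda>i. c * X i)"
  unfolding incr_def by auto

lemma gradF_eq:
  assumes "incr N X" "i \<in> {1..N}" "m > 1"
  shows "gradF m chi N X i = Pg m chi N X i"
proof -
  define V where "V j = (if j = i then 1 else (0::real))" for j
  have "((\<lambda>s. FmN m chi N (X(i := s))) has_real_derivative Draw m chi N ((\<lambda>s. X(i := s)) (X i)) V) (at (X i))"
  proof (rule chain_raw)
    show "incr N ((\<lambda>s. X(i := s)) (X i))" using assms(1) by simp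
    fix j assume "j \<in> {1..N}"
    show "((\<lambda>s. (X(i := s)) j) has_real_derivative V j) (at (X i))"
      by (cases "j = i") (auto simp: V_def intro: derivative_eq_intros)
  qed
  moreover have "Draw m chi N ((\<lambda>s. X(i := s)) (X i)) V = Pg m chi N X i"
  proof -
    have "Draw m chi N ((\<lambda>s. X(i := s)) (X i)) V = (\<Sum>j=1..N. Pg m chi N X j * V j)"
      using rearr[OF assms(3,1)] by simp
    also have "\<dots> = (\<Sum>j=1..N. if j = i then Pg m chi N X j else 0)"
      by (rule sum.cong) (auto simp: V_def)
    also have "\<dots> = Pg m chi N X i" using assms(2) by (simp add: sum.delta')
    finally show ?thesis .
  qed
  ultimately show ?thesis unfolding gradF_def by (simp add: DERIV_imp_deriv)
qed

lemma enorm_pos: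
  assumes "incr N X" "N \<ge> 2"
  shows "(\<Sum>i=1..N. (X i)\<^sup>2) > 0"
proof -
  have "X 1 < X (Suc 1)" using assms unfolding incr_def by auto
  then have "X 1 < X 2" by (simp add: numeral_2_eq_2)
  then have "X 1 \<noteq> 0 \<or> X 2 \<noteq> 0" by auto
  moreover have "(X 1)\<^sup>2 \<le> (\<Sum>i=1..N. (X i)\<^sup>2)" "(X 2)\<^sup>2 \<le> (\<Sum>i=1..N. (X i)\<^sup>2)"
    using assms(2) by (intro member_le_sum; simp)+
  ultimately show ?thesis by (smt (verit) zero_less_power2)
qed

lemma enorm_deriv:
  assumes "incr N (Z t)" "N \<ge> 2"
    and "\<And>i. i \<in> {1..N} \<Longrightarrow> ((\<lambda>s. Z s i) has_real_derivative V i) (at t within S)"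
  shows "((\<lambda>s. enorm N (Z s)) has_real_derivative (\<Sum>i=1..N. Z t i * V i) / enorm N (Z t)) (at t within S)"
proof -
  have q: "(\<Sum>i=1..N. (Z t i)\<^sup>2) > 0" by (rule enorm_pos[OF assms(1,2)])
  have dq: "((\<lambda>s. \<Sum>i=1..N. (Z s i)\<^sup>2) has_real_derivative (\<Sum>i=1..N. 2 * (Z t i * V i))) (at t within S)"
  proof (rule DERIV_sum)
    fix i assume i: "i \<in> {1..N}"
    show "((\<lambda>s. (Z s i)\<^sup>2) has_real_derivative 2 * (Z t i * V i)) (at t within S)"
      using DERIV_mult'[OF assms(3)[OF i] assms(3)[OF i]] by (simp add: power2_eq_square algebra_simps)
  qed
  have "((\<lambda>s. sqrt (\<Sum>i=1..N. (Z s i)\<^sup>2)) has_real_derivative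
      inverse (sqrt (\<Sum>i=1..N. (Z t i)\<^sup>2)) / 2 * (\<Sum>i=1..N. 2 * (Z t i * V i))) (at t within S)"
    by (rule DERIV_chain2[OF DERIV_real_sqrt[OF q] dq])
  moreover have "inverse (sqrt (\<Sum>i=1..N. (Z t i)\<^sup>2)) / 2 * (\<Sum>i=1..N. 2 * (Z t i * V i))
     = (\<Sum>i=1..N. Z t i * V i) / sqrt (\<Sum>i=1..N. (Z t i)\<^sup>2)"
  proof -
    have e1: "(\<Sum>i=1..N. 2 * (Z t i * V i)) = 2 * (\<Sum>i=1..N. Z t i * V i)"
      by (simp only: sum_distrib_left)
    have e2: "inverse r / 2 * (2 * A) = A / r" for r A :: real
      by (cases "r = 0") (simp_all add: field_simps)
    show ?thesis unfolding e1 e2 ..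
  qed
  ultimately show ?thesis unfolding enorm_def by simp
qed

lemma concave_deriv:
  fixes f g :: "real \<Rightarrow> real"
  assumes conv: "\<And>x y z. x \<in> A \<Longrightarrow> y \<in> A \<Longrightarrow> x \<le> z \<Longrightarrow> z \<le> y \<Longrightarrow> z \<in> A"
    and der: "\<And>z. z \<in> A \<Longrightarrow> (f has_real_derivative g z) (at z within A)"
    and int: "\<And>x y z. x \<in> A \<Longrightarrow> y \<in> A \<Longrightarrow> x < z \<Longrightarrow> z < y \<Longrightarrow> at z within A = at z"
    and mono: "\<And>x y. x \<in> A \<Longrightarrow> y \<in> A \<Longrightarrow> x \<le> y \<Longrightarrow> g y \<le> g x"
  shows "concave_on A f"
proof (rule concave_on_linorderI)
  show "convex A"
  proof (rule convexI)
    fix x y :: real and u v :: real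
    assume xy: "x \<in> A" "y \<in> A" and uv: "0 \<le> u" "0 \<le> v" "u + v = 1"
    have "min x y \<le> u *\<^sub>R x + v *\<^sub>R y \<and> u *\<^sub>R x + v *\<^sub>R y \<le> max x y"
    proof -
      have "u * x + v * y \<ge> u * min x y + v * min x y"
        using uv by (intro add_mono mult_left_mono) auto
      moreover have "u * x + v * y \<le> u * max x y + v * max x y"
        using uv by (intro add_mono mult_left_mono) auto
      moreover have "u * min x y + v * min x y = min x y" "u * max x y + v * max x y = max x y"
        using uv by (simp_all add: distrib_right[symmetric])
      ultimately show ?thesis by simp
    qed
    then show "u *\<^sub>R x + v *\<^sub>R y \<in> A"
      using conv[of "min x y" "max x y"] xy by (cases "x \<le> y") (auto simp: min_def max_def)
  qed
next
  have cont: "continuous_on A f" using der by (rule DERIV_continuous_on)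
  fix t x y :: real
  assume t: "t > 0" "t < 1" and xy: "x \<in> A" "y \<in> A" "x < y"
  define z where "z = (1 - t) * x + t * y"
  have zx: "z - x = t * (y - x)" by (simp add: z_def algebra_simps)
  have yz: "y - z = (1 - t) * (y - x)" by (simp add: z_def algebra_simps)
  have "t * (y - x) > 0" using t xy by simp
  then have xz: "x < z" using zx by simp
  have "(1 - t) * (y - x) > 0" using t xy by simp
  then have zy: "z < y" using yz by simp
  have sub: "{a..b} \<subseteq> A" if "a \<in> A" "b \<in> A" for a b
    using conv[OF that] by auto
  have zA: "z \<in> A" using conv[OF xy(1,2), of z] xz zy by simp
  have dat: "(f has_real_derivative g w) (at w)" if "x < w" "w < y" for w
  proof -
    have "w \<in> A" using conv[OF xy(1,2), of w] that by simp
    then show ?thesis using der[of w] int[OF xy(1,2) that] by simp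
  qed
  have diff: "f differentiable (at w)" if "x < w" "w < y" for w
    using dat[OF that] real_differentiable_def by blast
  have "\<exists>l \<xi>. x < \<xi> \<and> \<xi> < z \<and> (f has_real_derivative l) (at \<xi>) \<and> f z - f x = (z - x) * l"
    by (rule MVT[OF xz continuous_on_subset[OF cont sub[OF xy(1) zA]]]) (use diff zy in auto)
  then obtain l1 \<xi> where \<xi>: "x < \<xi>" "\<xi> < z" "(f has_real_derivative l1) (at \<xi>)" "f z - f x = (z - x) * l1"
    by blast
  have "\<exists>l \<eta>. z < \<eta> \<and> \<eta> < y \<and> (f has_real_derivative l) (at \<eta>) \<and> f y - f z = (y - z) * l"
    by (rule MVT[OF zy continuous_on_subset[OF cont sub[OF zA xy(2)]]]) (use diff xz in auto)
  then obtain l2 \<eta> where \<eta>: "z < \<eta>" "\<eta> < y" "(f has_real_derivative l2) (at \<eta>)" "f y - f z = (y - z) * l2"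
    by blast
  have l1: "l1 = g \<xi>" using DERIV_unique[OF \<xi>(3) dat[of \<xi>]] \<xi> zy by simp
  have l2: "l2 = g \<eta>" using DERIV_unique[OF \<eta>(3) dat[of \<eta>]] \<eta> xz by simp
  have "\<xi> \<in> A" using conv[OF xy(1,2), of \<xi>] \<xi> zy by simp
  have "\<eta> \<in> A" using conv[OF xy(1,2), of \<eta>] \<eta> xz by simp
  have ge: "g \<eta> \<le> g \<xi>" using mono[OF \<open>\<xi> \<in> A\<close> \<open>\<eta> \<in> A\<close>] \<xi> \<eta> by simp
  have A1: "(f y - f z) * (z - x) = ((y - z) * (z - x)) * g \<eta>" using \<eta>(4) l2 by (simp add: mult_ac)
  have B1: "(f z - f x) * (y - z) = ((y - z) * (z - x)) * g \<xi>" using \<xi>(4) l1 by (simp add: mult_ac)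
  have "((y - z) * (z - x)) * g \<eta> \<le> ((y - z) * (z - x)) * g \<xi>"
    by (rule mult_left_mono[OF ge]) (use xz zy in simp)
  then have "(f y - f z) * (z - x) \<le> (f z - f x) * (y - z)" unfolding A1 B1 .
  then have "((f y - f z) * t) * (y - x) \<le> ((f z - f x) * (1 - t)) * (y - x)"
    unfolding zx yz by (simp add: mult_ac)
  then have h: "(f y - f z) * t \<le> (f z - f x) * (1 - t)"
    by (rule mult_right_le_imp_le) (use xy in simp)
  have "(1 - t) *\<^sub>R x + t *\<^sub>R y = z" by (simp add: z_def)
  moreover have "(1 - t) * f x + t * f y \<le> f z" using h by (simp add: algebra_simps)
  ultimately show "(1 - t) * f x + t * f y \<le> f ((1 - t) *\<^sub>R x + t *\<^sub>R y)" by simp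
qed


lemma enorm_sq: "(enorm N Z)\<^sup>2 = (\<Sum>i=1..N. (Z i)\<^sup>2)"
  unfolding enorm_def by (simp add: sum_nonneg)

lemma final_alg:
  fixes P e F G m :: real
  assumes "P > 0" "e > 0" "m > 1"
  shows "(m - 1) * F * ((m - 1) * (P / e) * ((m - 1) * F / e)) + (m - 1) * (- G) * P
     = - ((m - 1) / (m + 1)) * inverse (1 / (m + 1) * (P * e\<^sup>2)) * ((P * e)\<^sup>2 * G - ((m - 1) * (P * F))\<^sup>2)"
proof -
  have pe: "P * e\<^sup>2 > 0" using assms by simp
  have i: "inverse (1 / (m + 1) * (P * e\<^sup>2)) = (m + 1) / (P * e\<^sup>2)"
    using assms by (simp add: field_simps)
  have mp: "m + 1 \<noteq> 0" using assms by simp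
  have r0: "(m - 1) / (m + 1) * ((m + 1) / c) = (m - 1) / c" for c
  proof -
    have "(m - 1) / (m + 1) * ((m + 1) / c) = ((m + 1) * (m - 1)) / ((m + 1) * c)"
      by (metis times_divide_times_eq mult.commute)
    also have "\<dots> = (m - 1) / c" by (rule nonzero_mult_divide_mult_cancel_left[OF mp])
    finally show ?thesis .
  qed
  have r: "- ((m - 1) / (m + 1)) * ((m + 1) / (P * e\<^sup>2)) = - ((m - 1) / (P * e\<^sup>2))"
    by (simp only: mult_minus_left r0)
  have "- ((m - 1) / (m + 1)) * inverse (1 / (m + 1) * (P * e\<^sup>2)) * ((P * e)\<^sup>2 * G - ((m - 1) * (P * F))\<^sup>2)
     = - ((m - 1) / (P * e\<^sup>2)) * (P * (P * e\<^sup>2) * G - P * (P * ((m - 1) * F)\<^sup>2))"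
    unfolding i r by (simp add: power2_eq_square algebra_simps)
  also have "\<dots> = - (m - 1) * P * G + (m - 1) * P * ((m - 1) * F)\<^sup>2 / e\<^sup>2"
    using pe assms by (simp add: field_simps)
  also have "\<dots> = (m - 1) * F * ((m - 1) * (P / e) * ((m - 1) * F / e)) + (m - 1) * (- G) * P"
    using assms by (simp add: field_simps power2_eq_square)
  finally show ?thesis by simp
qed

lemma alg_df:
  fixes m E Q K :: real
  assumes "m > 1" "E > 0"
  shows "1 / (m + 1) * ((m + 1) * (Q * E) * (K / E)) = K * Q"
proof -
  have "1 / (m + 1) * ((m + 1) * (Q * E) * (K / E)) = 1 / (m + 1) * ((m + 1) * ((Q * E) * (K / E)))"
    by (simp only: mult.assoc)
  also have "\<dots> = (Q * E) * (K / E)" using assms(1) by simp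
  also have "\<dots> = K * Q" using assms(2) by simp
  finally show ?thesis .
qed

lemma final_neg:
  fixes P e F G m :: real
  assumes "P > 0" "e > 0" "m > 1" "((m - 1) * F)\<^sup>2 \<le> e\<^sup>2 * G"
  shows "(m - 1) * F * ((m - 1) * (P / e) * ((m - 1) * F / e)) + (m - 1) * (- G) * P \<le> 0"
proof -
  have "(m - 1) * F * ((m - 1) * (P / e) * ((m - 1) * F / e)) + (m - 1) * (- G) * P
      = ((m - 1) * P / e\<^sup>2) * (((m - 1) * F)\<^sup>2 - e\<^sup>2 * G)"
    using assms by (simp add: field_simps power2_eq_square)
  also have "\<dots> \<le> 0"
    using assms by (intro mult_nonneg_nonpos) auto
  finally show ?thesis .
qed

lemma HmN_nonneg:
  assumes "m > 1" "inRN N Y" "enorm N Y = 1"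
  shows "HmN m chi N Y \<ge> 0"
proof -
  have inc: "incr N Y" using assms(2) unfolding inRN_def incr_def by blast
  have g: "(enorm N (gradF m chi N Y))\<^sup>2 = (\<Sum>i=1..N. (Pg m chi N Y i)\<^sup>2)"
    unfolding enorm_sq by (rule sum.cong) (auto simp: gradF_eq[OF inc _ assms(1)])
  have y: "(\<Sum>i=1..N. (Y i)\<^sup>2) = 1" using assms(3) enorm_sq[of N Y] by simp
  have "(m - 1) * FmN m chi N Y = - Draw m chi N Y Y" using euler[OF assms(1) inc] by (simp add: algebra_simps)
  also have "\<dots> = - (\<Sum>i=1..N. Pg m chi N Y i * Y i)" using rearr[OF assms(1) inc] by simp
  finally have "((m - 1) * FmN m chi N Y)\<^sup>2 = (\<Sum>i=1..N. Pg m chi N Y i * Y i)\<^sup>2" by simp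
  also have "\<dots> \<le> (\<Sum>i=1..N. (Pg m chi N Y i)\<^sup>2) * (\<Sum>i=1..N. (Y i)\<^sup>2)"
    by (rule Cauchy_Schwarz_ineq_sum)
  finally show ?thesis unfolding HmN_def g y by simp
qed

theorem proposition4p5:
  fixes m chi :: real and N :: nat and X0 :: "nat \<Rightarrow> real" and T :: ereal
    and X :: "real \<Rightarrow> nat \<Rightarrow> real" and f :: "real \<Rightarrow> real"
  assumes "m > 1" and "N \<ge> 2" and "chi > 0" and "inRN N X0"
    and "is_maximal_solution m chi N X0 T X"
    and "f = (\<lambda>t. 1 / (m + 1) * enorm N (X t) powr (m + 1))"
  shows "concave_on {t. 0 \<le> t \<and> ereal t < T} f
    \<and> (\<forall>t. 0 \<le> t \<and> ereal t < T \<longrightarrow>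
          (f has_real_derivative
             ((m - 1) * FmN m chi N (X t) * enorm N (X t) powr (m - 1)))
            (at t within {s. 0 \<le> s \<and> ereal s < T})
        \<and> ((\<lambda>s. (m - 1) * FmN m chi N (X s) * enorm N (X s) powr (m - 1)) has_real_derivative
             (- ((m - 1) / (m + 1)) * inverse (f t)
                * HmN m chi N (\<lambda>i. X t i / enorm N (X t))))
            (at t within {s. 0 \<le> s \<and> ereal s < T}))
    \<and> (\<forall>Y. inRN N Y \<and> enorm N Y = 1 \<longrightarrow> HmN m chi N Y \<ge> 0)"
proof -
  define S where "S = {s. 0 \<le> s \<and> ereal s < T}"
  define g where "g = (\<lambda>s. (m - 1) * FmN m chi N (X s) * enorm N (X s) powr (m - 1))"
  define G where "G t = (\<Sum>i=1..N. (Pg m chi N (X t) i)\<^sup>2)" for t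
  define Dg where "Dg t = (m - 1) * FmN m chi N (X t) * ((m - 1) * enorm N (X t) powr (m - 1 - 1)
       * ((m - 1) * FmN m chi N (X t) / enorm N (X t))) + (m - 1) * (- G t) * enorm N (X t) powr (m - 1)" for t
  have m1: "m > 1" by (rule assms(1))
  have sol: "is_solution m chi N X0 T X" using assms(5) unfolding is_maximal_solution_def by blast
  have inR: "inRN N (X t)" if "t \<in> S" for t using sol that unfolding is_solution_def S_def by blast
  have der: "((\<lambda>s. X s i) has_real_derivative flow_rhs m chi N (X t) i) (at t within S)"
    if "t \<in> S" "i \<in> {1..N}" for t i
    using sol that unfolding is_solution_def S_def by blast
  have inc: "incr N (X t)" if "t \<in> S" for t using inR[OF that] unfolding inRN_def incr_def by blast
  have fl: "flow_rhs m chi N (X t) i = - Pg m chi N (X t) i" for t i by (simp add: Pg_def)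
  have epos: "enorm N (X t) > 0" if "t \<in> S" for t
    using enorm_pos[OF inc[OF that] assms(2)] unfolding enorm_def by simp
  have sXf: "(\<Sum>i=1..N. X t i * flow_rhs m chi N (X t) i) = (m - 1) * FmN m chi N (X t)"
    if "t \<in> S" for t
  proof -
    have "(\<Sum>i=1..N. X t i * flow_rhs m chi N (X t) i) = - (\<Sum>i=1..N. Pg m chi N (X t) i * X t i)"
      by (simp add: fl sum_negf mult.commute)
    also have "\<dots> = - Draw m chi N (X t) (X t)" using rearr[OF m1 inc[OF that]] by simp
    also have "\<dots> = (m - 1) * FmN m chi N (X t)" using euler[OF m1 inc[OF that]] by (simp add: algebra_simps)
    finally show ?thesis .
  qed
  have de: "((\<lambda>s. enorm N (X s)) has_real_derivative (m - 1) * FmN m chi N (X t) / enorm N (X t)) (at t within S)"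
    if "t \<in> S" for t
    using enorm_deriv[where Z=X and t=t and V="flow_rhs m chi N (X t)" and S=S, OF inc[OF that] assms(2)] der[OF that] sXf[OF that]
    by simp
  have pw: "((\<lambda>s. enorm N (X s) powr r) has_real_derivative
      r * enorm N (X t) powr (r - 1) * ((m - 1) * FmN m chi N (X t) / enorm N (X t))) (at t within S)"
    if "t \<in> S" for t r
    by (rule DERIV_chain2[OF has_real_derivative_powr[OF epos[OF that]] de[OF that]])
  have pm: "e powr m = e powr (m - 1) * e" "e powr (m - 1) = e powr (m - 1 - 1) * e"
      "e powr (m + 1) = e powr (m - 1) * e\<^sup>2" if "e > 0" for e :: real
  proof -
    have "e powr ((m - 1) + 1) = e powr (m - 1) * e powr 1" by (rule powr_add)
    then show "e powr m = e powr (m - 1) * e" using that by simp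
    have "e powr ((m - 1 - 1) + 1) = e powr (m - 1 - 1) * e powr 1" by (rule powr_add)
    then show "e powr (m - 1) = e powr (m - 1 - 1) * e" using that by simp
    have "e powr ((m - 1) + 2) = e powr (m - 1) * e powr 2" by (rule powr_add)
    moreover have "e powr (m + 1) = e powr ((m - 1) + 2)" by (simp add: add.commute)
    ultimately show "e powr (m + 1) = e powr (m - 1) * e\<^sup>2" using that by (simp add: powr_numeral)
  qed
  have df: "(f has_real_derivative (m - 1) * FmN m chi N (X t) * enorm N (X t) powr (m - 1)) (at t within S)"
    if "t \<in> S" for t
  proof -
    have "((\<lambda>s. 1 / (m + 1) * enorm N (X s) powr (m + 1)) has_real_derivative
       1 / (m + 1) * ((m + 1) * enorm N (X t) powr (m + 1 - 1) * ((m - 1) * FmN m chi N (X t) / enorm N (X t))))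
       (at t within S)"
      by (rule DERIV_cmult[OF pw[OF that]])
    moreover have "1 / (m + 1) * ((m + 1) * enorm N (X t) powr (m + 1 - 1) * ((m - 1) * FmN m chi N (X t) / enorm N (X t)))
       = (m - 1) * FmN m chi N (X t) * enorm N (X t) powr (m - 1)"
    proof -
      have e: "enorm N (X t) > 0" by (rule epos[OF that])
      have a: "enorm N (X t) powr (m + 1 - 1) = enorm N (X t) powr (m - 1) * enorm N (X t)"
        using pm(1)[OF e] by simp
      show ?thesis unfolding a by (rule alg_df[OF m1 e])
    qed
    ultimately show ?thesis using assms(6) by simp
  qed
  have dg: "(g has_real_derivative Dg t) (at t within S)" if "t \<in> S" for t
  proof -
    have dF: "((\<lambda>s. FmN m chi N (X s)) has_real_derivative - G t) (at t within S)"
    proof -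
      have "((\<lambda>s. FmN m chi N (X s)) has_real_derivative Draw m chi N (X t) (flow_rhs m chi N (X t))) (at t within S)"
        by (rule chain_raw[where Z=X and t=t, OF inc[OF that]]) (rule der[OF that])
      moreover have "Draw m chi N (X t) (flow_rhs m chi N (X t)) = - G t"
        using rearr[OF m1 inc[OF that]] by (simp add: G_def fl sum_negf power2_eq_square)
      ultimately show ?thesis by simp
    qed
    have "((\<lambda>s. (m - 1) * FmN m chi N (X s) * enorm N (X s) powr (m - 1)) has_real_derivative
       (m - 1) * FmN m chi N (X t) * ((m - 1) * enorm N (X t) powr (m - 1 - 1) * ((m - 1) * FmN m chi N (X t) / enorm N (X t)))
       + (m - 1) * (- G t) * enorm N (X t) powr (m - 1)) (at t within S)"
      by (rule DERIV_mult'[OF DERIV_cmult[OF dF] pw[OF that]])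
    then show ?thesis unfolding g_def Dg_def .
  qed
  have CS: "((m - 1) * FmN m chi N (X t))\<^sup>2 \<le> (enorm N (X t))\<^sup>2 * G t" if "t \<in> S" for t
  proof -
    have "((m - 1) * FmN m chi N (X t))\<^sup>2 = (\<Sum>i=1..N. X t i * flow_rhs m chi N (X t) i)\<^sup>2"
      using sXf[OF that] by simp
    also have "\<dots> \<le> (\<Sum>i=1..N. (X t i)\<^sup>2) * (\<Sum>i=1..N. (flow_rhs m chi N (X t) i)\<^sup>2)"
      by (rule Cauchy_Schwarz_ineq_sum)
    also have "\<dots> = (enorm N (X t))\<^sup>2 * G t" by (simp add: enorm_sq G_def fl)
    finally show ?thesis .
  qed
  have Dneg: "Dg t \<le> 0" if "t \<in> S" for t
  proof -
    have e: "enorm N (X t) > 0" by (rule epos[OF that])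
    have P: "enorm N (X t) powr (m - 1) > 0" using e by simp
    have "enorm N (X t) powr (m - 1 - 1) = enorm N (X t) powr (m - 1) / enorm N (X t)"
      using pm(2)[OF e] e by simp
    then show ?thesis unfolding Dg_def using final_neg[OF P e m1 CS[OF that]] by (simp add: mult.assoc)
  qed
  have Deq: "Dg t = - ((m - 1) / (m + 1)) * inverse (f t) * HmN m chi N (\<lambda>i. X t i / enorm N (X t))"
    if "t \<in> S" for t
  proof -
    define e where "e = enorm N (X t)"
    define P where "P = e powr (m - 1)"
    define F where "F = FmN m chi N (X t)"
    have e: "e > 0" unfolding e_def by (rule epos[OF that])
    have P: "P > 0" unfolding P_def using e by simp
    have Y: "(\<lambda>i. X t i / enorm N (X t)) = (\<lambda>i. inverse e * X t i)"
      by (simp add: e_def divide_inverse mult.commute)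
    have ie: "inverse e > 0" using e by simp
    have incY: "incr N (\<lambda>i. inverse e * X t i)" by (rule incr_scale[OF ie inc[OF that]])
    have gY: "(enorm N (gradF m chi N (\<lambda>i. inverse e * X t i)))\<^sup>2 = (P * e)\<^sup>2 * G t"
    proof -
      have "(enorm N (gradF m chi N (\<lambda>i. inverse e * X t i)))\<^sup>2
          = (\<Sum>i=1..N. (P * e)\<^sup>2 * (Pg m chi N (X t) i)\<^sup>2)"
        unfolding enorm_sq
      proof (rule sum.cong[OF refl])
        fix i assume i: "i \<in> {1..N}"
        have "inverse e powr (- m) = e powr m" by (simp add: inverse_powr powr_minus)
        also have "\<dots> = P * e" using pm(1)[OF e] by (simp add: P_def)
        finally have c: "inverse e powr (- m) = P * e" .
        show "(gradF m chi N (\<lambda>i. inverse e * X t i) i)\<^sup>2 = (P * e)\<^sup>2 * (Pg m chi N (X t) i)\<^sup>2"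
          using gradF_eq[OF incY i m1] Pg_scale[OF ie inc[OF that] i] c by (simp add: power_mult_distrib)
      qed
      then show ?thesis by (simp add: G_def sum_distrib_left)
    qed
    have FY: "FmN m chi N (\<lambda>i. inverse e * X t i) = P * F"
    proof -
      have q: "e powr (1 - m) = inverse (e powr (m - 1))" using powr_minus[of e "m - 1"] by simp
      have "inverse e powr (1 - m) = inverse (e powr (1 - m))" by (simp add: inverse_powr)
      also have "\<dots> = P" by (simp add: q P_def)
      finally show ?thesis using FmN_scale[OF ie inc[OF that]] by (simp add: F_def)
    qed
    have ft: "f t = 1 / (m + 1) * (P * e\<^sup>2)"
      using assms(6) pm(3)[OF e] by (simp add: e_def P_def)
    have pe: "enorm N (X t) powr (m - 1 - 1) = P / e"
      using pm(2)[OF e] e by (simp add: P_def e_def)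
    show ?thesis
      unfolding Dg_def HmN_def Y gY FY ft pe
      using final_alg[OF P e m1, of F "G t"] by (simp add: e_def[symmetric] P_def[symmetric] F_def[symmetric])
  qed
  have conv: "z \<in> S" if "x \<in> S" "y \<in> S" "x \<le> z" "z \<le> y" for x y z
  proof -
    have "ereal z \<le> ereal y" using that(4) by simp
    moreover have "ereal y < T" using that(2) unfolding S_def by simp
    ultimately have "ereal z < T" by (rule le_less_trans)
    then show ?thesis using that(1,3) unfolding S_def by simp
  qed
  have int: "at z within S = at z" if "x \<in> S" "y \<in> S" "x < z" "z < y" for x y z
  proof (rule at_within_interior)
    have "{x<..<y} \<subseteq> S" using conv[OF that(1,2)] by auto
    then have "{x<..<y} \<subseteq> interior S" by (rule interior_maximal) simp
    then show "z \<in> interior S" using that by auto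
  qed
  have gcont: "continuous_on S g" using dg by (rule DERIV_continuous_on)
  have mono: "g y \<le> g x" if "x \<in> S" "y \<in> S" "x \<le> y" for x y
  proof (rule DERIV_nonpos_imp_decreasing_open[OF that(3)])
    fix w assume w: "x < w" "w < y"
    have wS: "w \<in> S" using conv[OF that(1,2), of w] w by simp
    show "\<exists>D. (g has_real_derivative D) (at w) \<and> D \<le> 0"
      using dg[OF wS] int[OF that(1,2) w] Dneg[OF wS] by auto
  next
    have "{x..y} \<subseteq> S" using conv[OF that(1,2)] by auto
    then show "continuous_on {x..y} g" using gcont continuous_on_subset by blast
  qed
  have dfg: "(f has_real_derivative g z) (at z within S)" if "z \<in> S" for z
    using df[OF that] unfolding g_def .
  have conc: "concave_on S f"
    by (rule concave_deriv[OF conv dfg int mono])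
  have H: "\<forall>Y. inRN N Y \<and> enorm N Y = 1 \<longrightarrow> HmN m chi N Y \<ge> 0"
    using HmN_nonneg[OF m1] by blast
  have all: "\<forall>t. 0 \<le> t \<and> ereal t < T \<longrightarrow>
          (f has_real_derivative
             ((m - 1) * FmN m chi N (X t) * enorm N (X t) powr (m - 1)))
            (at t within {s. 0 \<le> s \<and> ereal s < T})
        \<and> ((\<lambda>s. (m - 1) * FmN m chi N (X s) * enorm N (X s) powr (m - 1)) has_real_derivative
             (- ((m - 1) / (m + 1)) * inverse (f t)
                * HmN m chi N (\<lambda>i. X t i / enorm N (X t))))
            (at t within {s. 0 \<le> s \<and> ereal s < T})"
  proof (intro allI impI)
    fix t assume "0 \<le> t \<and> ereal t < T"
    then have tS: "t \<in> S" by (simp add: S_def)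
    have a: "(f has_real_derivative
             ((m - 1) * FmN m chi N (X t) * enorm N (X t) powr (m - 1))) (at t within S)"
      by (rule df[OF tS])
    have b: "(g has_real_derivative (- ((m - 1) / (m + 1)) * inverse (f t)
                * HmN m chi N (\<lambda>i. X t i / enorm N (X t)))) (at t within S)"
      using dg[OF tS] unfolding Deq[OF tS] .
    show "(f has_real_derivative
             ((m - 1) * FmN m chi N (X t) * enorm N (X t) powr (m - 1)))
            (at t within {s. 0 \<le> s \<and> ereal s < T})
        \<and> ((\<lambda>s. (m - 1) * FmN m chi N (X s) * enorm N (X s) powr (m - 1)) has_real_derivative
             (- ((m - 1) / (m + 1)) * inverse (f t)
                * HmN m chi N (\<lambda>i. X t i / enorm N (X t))))
            (at t within {s. 0 \<le> s \<and> ereal s < T})"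
      using a b unfolding S_def g_def by (rule conjI)
  qed
  show ?thesis
    using conc all H unfolding S_def by (intro conjI)
qed

end
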